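(* For all real numbers $x,y$ with $1 \leqslant y \leqslant x$, \[ \frac{-N(x)}{x}=\sum_{k \leqslant y} \frac{\Lambda(k)}{k} \frac{M(x/k)}{x/k}+\sum_{j \leqslant x/y} \frac{\mu(j)}{j} \frac{\psi(x/j)-x/j}{x/j}-\frac{\psi(y)-y}{y}\frac{M(x/y)}{x/y}+m_1(x/y). \]
   Context: $\mu$ is the Möbius function and $\Lambda$ the von Mangoldt function ($\Lambda(n)=\log p$ if $n=p^k$ with $p$ prime and $k\geqslant 1$, else $0$). For real $x>0$: $M(x)=\sum_{n\leqslant x}\mu(n)$, $m(x)=\sum_{n\leqslant x}\mu(n)/n$, $m_1(x)=m(x)-M(x)/x=\sum_{n\leqslant x}\frac{\mu(n)}{n}(1-n/x)$, $N(x)=\sum_{n\leqslant x}\mu(n)\log n$, $\psi(x)=\sum_{n\leqslant x}\Lambda(n)$. Sums run over positive integers. *)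

theory Defs
  imports "HOL-Number_Theory.Number_Theory" "HOL-Computational_Algebra.Squarefree"
begin

definition moebius_mu :: "nat \<Rightarrow> real" where
  "moebius_mu n = (if squarefree n then (-1) ^ card (prime_factors n) else 0)"

definition Mertens :: "real \<Rightarrow> real" where
  "Mertens x = (\<Sum>n\<in>{1..nat \<lfloor>x\<rfloor>}. moebius_mu n)"

definition mlog :: "real \<Rightarrow> real" where
  "mlog x = (\<Sum>n\<in>{1..nat \<lfloor>x\<rfloor>}. moebius_mu n / real n)"

definition m1 :: "real \<Rightarrow> real" where
  "m1 x = mlog x - Mertens x / x"

definition Nmu :: "real \<Rightarrow> real" where
  "Nmu x = (\<Sum>n\<in>{1..nat \<lfloor>x\<rfloor>}. moebius_mu n * ln (real n))"

definition psi :: "real \<Rightarrow> real" where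
  "psi x = (\<Sum>n\<in>{1..nat \<lfloor>x\<rfloor>}. mangoldt n)"

end

theory Submission
  imports Defs
begin



lemma prod_primes_props:
  fixes n :: nat
  assumes "n > 0" "S \<subseteq> prime_factors n"
  shows "prime_factors (\<Prod>S) = S" "\<Prod>S dvd n" "squarefree (\<Prod>S)" "card (prime_factors (\<Prod>S)) = card S"
proof -
  have fin: "finite S" using assms finite_subset by blast
  have pr: "\<And>p. p \<in> S \<Longrightarrow> prime p" using assms by auto
  show 1: "prime_factors (\<Prod>S) = S"
  proof -
    have "prime_factors (prod id S) = \<Union>((prime_factors \<circ> id) ` S)"
      by (rule prime_factors_prod) (use fin in \<open>auto dest: pr\<close>)
    also have "\<dots> = S" using pr by (auto simp: prime_prime_factors)
    finally show ?thesis by simp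
  qed
  then show "card (prime_factors (\<Prod>S)) = card S" by simp
  have "\<Prod>S dvd \<Prod>(prime_factors n)" by (rule prod_dvd_prod_subset) (use assms in auto)
  also have "\<Prod>(prime_factors n) dvd (\<Prod>p\<in>prime_factors n. p ^ multiplicity p n)"
    by (rule prod_dvd_prod) (auto simp: prime_factors_multiplicity)
  also have "\<dots> = n" using assms prod_prime_factors[of n] by simp
  finally show "\<Prod>S dvd n" .
  show "squarefree (\<Prod>S)"
    using squarefree_prod_coprime[of S id] pr by (simp add: primes_coprime squarefree_prime)
qed

lemma squarefree_prod_pf:
  fixes d :: nat
  assumes "squarefree d"
  shows "\<Prod>(prime_factors d) = d"
proof -
  have d0: "d \<noteq> 0" using assms by (metis not_squarefree_0)
  have "(\<Prod>p\<in>prime_factors d. p ^ multiplicity p d) = d" using prod_prime_factors[OF d0] d0 by simp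
  moreover have "(\<Prod>p\<in>prime_factors d. p ^ multiplicity p d) = (\<Prod>p\<in>prime_factors d. p)"
    using assms d0 by (intro prod.cong) (auto simp: squarefree_factorial_semiring')
  ultimately show ?thesis by simp
qed

lemma moebius_sum:
  fixes n :: nat
  assumes "n > 0"
  shows "(\<Sum>d | d dvd n. moebius_mu d) = (if n = 1 then 1 else 0)"
proof -
  have fin: "finite {d. d dvd n}" using assms by simp
  have "(\<Sum>d | d dvd n. moebius_mu d) = (\<Sum>d \<in> {d. d dvd n \<and> squarefree d}. (-1) ^ card (prime_factors d))"
    by (rule sum.mono_neutral_cong_right) (use fin in \<open>auto simp: moebius_mu_def\<close>)
  also have "\<dots> = (\<Sum>S \<in> Pow (prime_factors n). (-1) ^ card S)"
  proof (rule sum.reindex_bij_witness[where i = "\<lambda>S. \<Prod>S" and j = prime_factors])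
    fix d assume d: "d \<in> {d. d dvd n \<and> squarefree d}"
    then show "\<Prod>(prime_factors d) = d" using squarefree_prod_pf by auto
    show "prime_factors d \<in> Pow (prime_factors n)"
      using d assms by (auto simp: prime_factors_dvd intro: dvd_trans)
    show "(-1) ^ card (prime_factors d) = ((-1) ^ card (prime_factors d) :: real)" by simp
  next
    fix S assume "S \<in> Pow (prime_factors n)"
    then have S: "S \<subseteq> prime_factors n" by simp
    show "prime_factors (\<Prod>S) = S" using prod_primes_props[OF assms S] by auto
    show "\<Prod>S \<in> {d. d dvd n \<and> squarefree d}" using prod_primes_props[OF assms S] by auto
  qed
  also have "\<dots> = (\<Prod>p\<in>prime_factors n. (1::real) - 1)"
    using prod_diff_conv_sum[of "prime_factors n" "\<lambda>_. 1::real" "\<lambda>_. 1"] by simp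
  also have "\<dots> = (if n = 1 then 1 else 0)"
  proof (cases "prime_factors n = {}")
    case True
    then have "n = 1" using prod_prime_factors[of n] assms by simp
    then show ?thesis using True by simp
  next
    case False
    then have "n \<noteq> 1" by auto
    then show ?thesis using False by (simp add: card_gt_0_iff)
  qed
  finally show ?thesis .
qed


lemma divisor_inner:
  fixes n d :: nat
  assumes "n > 0" "d dvd n"
  shows "(\<Sum>e | e dvd n div d. h e) = (\<Sum>e | e dvd n. if d * e dvd n then h e else (0::real))"
proof -
  have "(\<Sum>e | e dvd n. if d * e dvd n then h e else (0::real)) = (\<Sum>e \<in> {e. e dvd n} \<inter> {e. d * e dvd n}. h e)"
    using sum.inter_restrict[of "{e. e dvd n}" h "{e. d*e dvd n}"] assms by simp
  also have "{e. e dvd n} \<inter> {e. d * e dvd n} = {e. e dvd n div d}"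
    using assms by (auto simp: dvd_div_iff_mult mult.commute intro: dvd_mult_left)
  finally show ?thesis by simp
qed

lemma divisor_swap:
  fixes n :: nat
  assumes "n > 0"
  shows "(\<Sum>d | d dvd n. \<Sum>e | e dvd n div d. h d e) = (\<Sum>e | e dvd n. \<Sum>d | d dvd n div e. (h d e :: real))"
proof -
  have "(\<Sum>d | d dvd n. \<Sum>e | e dvd n div d. h d e) = (\<Sum>d | d dvd n. \<Sum>e | e dvd n. if d * e dvd n then h d e else 0)"
    using assms by (intro sum.cong refl divisor_inner) auto
  also have "\<dots> = (\<Sum>e | e dvd n. \<Sum>d | d dvd n. if d * e dvd n then h d e else 0)"
    by (rule sum.swap)
  also have "\<dots> = (\<Sum>e | e dvd n. \<Sum>d | d dvd n div e. h d e)"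
  proof (rule sum.cong[OF refl])
    fix e assume e: "e \<in> {e. e dvd n}"
    have "(\<Sum>d | d dvd n div e. h d e) = (\<Sum>d | d dvd n. if e * d dvd n then h d e else 0)"
      using divisor_inner[OF assms, of e "\<lambda>d. h d e"] e by simp
    then show "(\<Sum>d | d dvd n. if d * e dvd n then h d e else 0) = (\<Sum>d | d dvd n div e. h d e)"
      by (simp add: mult.commute)
  qed
  finally show ?thesis .
qed

lemma divisor_delta:
  fixes n :: nat
  assumes "n > 0"
  shows "(\<Sum>e | e dvd n. (\<Sum>d | d dvd n div e. moebius_mu d) * c e) = c n"
proof -
  have "(\<Sum>e | e dvd n. (\<Sum>d | d dvd n div e. moebius_mu d) * c e) = (\<Sum>e | e dvd n. if e = n then c e else 0)"
  proof (intro sum.cong refl)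
    fix e assume e: "e \<in> {e. e dvd n}"
    then have pos: "n div e > 0" using assms by (auto elim!: dvdE)
    have "n div e = 1 \<longleftrightarrow> e = n" using e assms by (auto elim!: dvdE)
    then show "(\<Sum>d | d dvd n div e. moebius_mu d) * c e = (if e = n then c e else 0)"
      using moebius_sum[OF pos] by simp
  qed
  also have "\<dots> = c n" using assms by (simp add: sum.delta)
  finally show ?thesis .
qed

lemma mangoldt_conv:
  fixes n :: nat
  assumes "n > 0"
  shows "(\<Sum>d | d dvd n. moebius_mu d * ln (real (n div d))) = mangoldt n"
proof -
  have "(\<Sum>d | d dvd n. moebius_mu d * ln (real (n div d))) = (\<Sum>d | d dvd n. \<Sum>e | e dvd n div d. moebius_mu d * mangoldt e)"
  proof (intro sum.cong refl)
    fix d assume d: "d \<in> {d. d dvd n}"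
    then have pos: "n div d > 0" using assms by (auto elim!: dvdE)
    show "moebius_mu d * ln (real (n div d)) = (\<Sum>e | e dvd n div d. moebius_mu d * mangoldt e)"
      using mangoldt_sum[of "n div d", where 'a=real] pos by (simp add: sum_distrib_left[symmetric])
  qed
  also have "\<dots> = (\<Sum>e | e dvd n. \<Sum>d | d dvd n div e. moebius_mu d * mangoldt e)"
    by (rule divisor_swap[OF assms])
  also have "\<dots> = (\<Sum>e | e dvd n. (\<Sum>d | d dvd n div e. moebius_mu d) * mangoldt e)"
    by (simp add: sum_distrib_right)
  also have "\<dots> = mangoldt n" by (rule divisor_delta[OF assms])
  finally show ?thesis .
qed

lemma mu_ln_conv:
  fixes n :: nat
  assumes "n > 0"
  shows "(\<Sum>d | d dvd n. moebius_mu d * ln (real d)) = - mangoldt n"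
proof -
  have "(\<Sum>d | d dvd n. moebius_mu d * ln (real d)) = (\<Sum>d | d dvd n. moebius_mu d * ln (real n) - moebius_mu d * ln (real (n div d)))"
  proof (intro sum.cong refl)
    fix d assume d: "d \<in> {d. d dvd n}"
    then have dpos: "d > 0" using assms by (auto intro: ccontr)
    have "real (n div d) = real n / real d" using d by (simp add: real_of_nat_div)
    then have L: "ln (real (n div d)) = ln (real n) - ln (real d)" using dpos assms by (simp add: ln_div)
    show "moebius_mu d * ln (real d) = moebius_mu d * ln (real n) - moebius_mu d * ln (real (n div d))"
      unfolding L by (simp add: right_diff_distrib)
  qed
  also have "\<dots> = (\<Sum>d | d dvd n. moebius_mu d) * ln (real n) - mangoldt n"
    by (simp add: sum_subtractf sum_distrib_right mangoldt_conv[OF assms])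
  also have "\<dots> = - mangoldt n" using moebius_sum[OF assms] by simp
  finally show ?thesis .
qed

lemma mu_mangoldt_conv:
  fixes n :: nat
  assumes "n > 0"
  shows "(\<Sum>d | d dvd n. moebius_mu d * mangoldt (n div d)) = - moebius_mu n * ln (real n)"
proof -
  have "(\<Sum>d | d dvd n. moebius_mu d * mangoldt (n div d)) = (\<Sum>d | d dvd n. \<Sum>e | e dvd n div d. - (moebius_mu d * (moebius_mu e * ln (real e))))"
  proof (intro sum.cong refl)
    fix d assume d: "d \<in> {d. d dvd n}"
    then have pos: "n div d > 0" using assms by (auto elim!: dvdE)
    show "moebius_mu d * mangoldt (n div d) = (\<Sum>e | e dvd n div d. - (moebius_mu d * (moebius_mu e * ln (real e))))"
      using mu_ln_conv[OF pos] by (simp add: sum_distrib_left[symmetric] sum_negf)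
  qed
  also have "\<dots> = (\<Sum>e | e dvd n. \<Sum>d | d dvd n div e. - (moebius_mu d * (moebius_mu e * ln (real e))))"
    by (rule divisor_swap[OF assms])
  also have "\<dots> = - (\<Sum>e | e dvd n. (\<Sum>d | d dvd n div e. moebius_mu d) * (moebius_mu e * ln (real e)))"
    by (simp add: sum_distrib_right sum_negf)
  also have "\<dots> = - moebius_mu n * ln (real n)" by (simp add: divisor_delta[OF assms])
  finally show ?thesis .
qed


lemma mem_floor: "(k::nat) \<in> {1..nat \<lfloor>t\<rfloor>} \<longleftrightarrow> 1 \<le> k \<and> real k \<le> t"
proof
  assume "k \<in> {1..nat \<lfloor>t\<rfloor>}"
  then have "1 \<le> k" "int k \<le> \<lfloor>t\<rfloor>" by auto
  then show "1 \<le> k \<and> real k \<le> t" by (simp add: le_floor_iff)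
next
  assume "1 \<le> k \<and> real k \<le> t"
  then have "1 \<le> k" "int k \<le> \<lfloor>t\<rfloor>" by (auto simp: le_floor_iff)
  then show "k \<in> {1..nat \<lfloor>t\<rfloor>}" by auto
qed

lemma Nmu_pairs:
  fixes x :: real
  shows "- Nmu x = (\<Sum>(d,k) \<in> {(d,k). 1 \<le> d \<and> 1 \<le> k \<and> real (d*k) \<le> x}. moebius_mu d * mangoldt k)"
proof -
  have "- Nmu x = (\<Sum>n\<in>{1..nat \<lfloor>x\<rfloor>}. \<Sum>d | d dvd n. moebius_mu d * mangoldt (n div d))"
    unfolding Nmu_def by (simp add: sum_negf[symmetric] mu_mangoldt_conv)
  also have "\<dots> = (\<Sum>(n,d) \<in> (SIGMA n:{1..nat \<lfloor>x\<rfloor>}. {d. d dvd n}). moebius_mu d * mangoldt (n div d))"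
    by (rule sum.Sigma) auto
  also have "\<dots> = (\<Sum>(d,k) \<in> {(d,k). 1 \<le> d \<and> 1 \<le> k \<and> real (d*k) \<le> x}. moebius_mu d * mangoldt k)"
  proof (rule sum.reindex_bij_witness[where j = "\<lambda>(n,d). (d, n div d)" and i = "\<lambda>(d,k). (d*k, d)"])
    fix a assume "a \<in> (SIGMA n:{1..nat \<lfloor>x\<rfloor>}. {d. d dvd n})"
    then obtain n d where a: "a = (n,d)" "n \<in> {1..nat \<lfloor>x\<rfloor>}" "d dvd n" by auto
    then have n: "1 \<le> n" "real n \<le> x" by (auto simp only: mem_floor)
    from a obtain k where nk: "n = d * k" by (auto elim: dvdE)
    have "d \<noteq> 0" "k \<noteq> 0" using n nk by auto
    then show "(case (case a of (n, d) \<Rightarrow> (d, n div d)) of (d, k) \<Rightarrow> (d * k, d)) = a"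
      "(case a of (n, d) \<Rightarrow> (d, n div d)) \<in> {(d,k). 1 \<le> d \<and> 1 \<le> k \<and> real (d*k) \<le> x}"
      "(case (case a of (n, d) \<Rightarrow> (d, n div d)) of (d, k) \<Rightarrow> moebius_mu d * mangoldt k) = (case a of (n, d) \<Rightarrow> moebius_mu d * mangoldt (n div d))"
      using a n nk by auto
  next
    fix b assume "b \<in> {(d,k). 1 \<le> d \<and> 1 \<le> k \<and> real (d*k) \<le> x}"
    then obtain d k where b: "b = (d,k)" "1 \<le> d" "1 \<le> k" "real (d*k) \<le> x" by auto
    have "d * k \<in> {1..nat \<lfloor>x\<rfloor>}" unfolding mem_floor using b by simp
    then show "(case (case b of (d, k) \<Rightarrow> (d * k, d)) of (n, d) \<Rightarrow> (d, n div d)) = b"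
      "(case b of (d, k) \<Rightarrow> (d * k, d)) \<in> (SIGMA n:{1..nat \<lfloor>x\<rfloor>}. {d. d dvd n})"
      using b by auto
  qed
  finally show ?thesis .
qed


lemma hyperbola:
  fixes x y :: real
  assumes "1 \<le> y" and "y \<le> x"
  shows "- Nmu x = (\<Sum>k\<in>{1..nat \<lfloor>y\<rfloor>}. mangoldt k * Mertens (x / real k))
    + (\<Sum>j\<in>{1..nat \<lfloor>x / y\<rfloor>}. moebius_mu j * psi (x / real j))
    - psi y * Mertens (x / y)"
proof -
  define P where "P = {(d,k). 1 \<le> d \<and> 1 \<le> k \<and> real (d*k) \<le> (x::real)}"
  define P1 where "P1 = {(d,k). (d,k) \<in> P \<and> real k \<le> y}"
  define P2 where "P2 = {(d,k). (d,k) \<in> P \<and> real d \<le> x / y}"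
  define g where "g = (\<lambda>(d,k). moebius_mu d * mangoldt k)"
  have ypos: "y > 0" using assms by simp
  have finP: "finite P"
  proof (rule finite_subset)
    show "P \<subseteq> {1..nat \<lfloor>x\<rfloor>} \<times> {1..nat \<lfloor>x\<rfloor>}"
    proof safe
      fix d k assume "(d,k) \<in> P"
      then have h: "1 \<le> d" "1 \<le> k" "real d * real k \<le> x" unfolding P_def by auto
      have "real d * 1 \<le> real d * real k" using h by (intro mult_left_mono) auto
      moreover have "1 * real k \<le> real d * real k" using h by (intro mult_right_mono) auto
      ultimately have "real d \<le> x" "real k \<le> x" using h(3) by linarith+
      then show "d \<in> {1..nat \<lfloor>x\<rfloor>}" "k \<in> {1..nat \<lfloor>x\<rfloor>}" unfolding mem_floor using h(1,2) by auto
    qed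
  qed auto
  have finP1: "finite P1" by (rule finite_subset[OF _ finP]) (auto simp: P1_def)
  have finP2: "finite P2" by (rule finite_subset[OF _ finP]) (auto simp: P2_def)
  have cover: "P = P1 \<union> P2"
  proof safe
    fix d k assume dk: "(d,k) \<in> P" "(d,k) \<notin> P2"
    show "(d,k) \<in> P1"
    proof (rule ccontr)
      assume "(d,k) \<notin> P1"
      then have "real k > y" "real d > x / y" using dk unfolding P1_def P2_def by auto
      moreover have "x / y > 0" using ypos assms by simp
      ultimately have "real d > 0" "real k > y" "real d > x / y" "y \<ge> 0" using ypos by auto
      then have "(x / y) * y < real d * real k"
        by (intro mult_strict_mono) auto
      then show False using dk ypos unfolding P_def by auto
    qed
  qed (auto simp: P1_def P2_def)
  have inter: "P1 \<inter> P2 = {1..nat \<lfloor>x / y\<rfloor>} \<times> {1..nat \<lfloor>y\<rfloor>}"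
  proof safe
    fix d k assume "(d,k) \<in> P1" "(d,k) \<in> P2"
    then show "d \<in> {1..nat \<lfloor>x / y\<rfloor>}" "k \<in> {1..nat \<lfloor>y\<rfloor>}"
      unfolding mem_floor P1_def P2_def P_def by auto
  next
    fix d k assume "d \<in> {1..nat \<lfloor>x / y\<rfloor>}" "k \<in> {1..nat \<lfloor>y\<rfloor>}"
    then have h: "1 \<le> d" "real d \<le> x / y" "1 \<le> k" "real k \<le> y" unfolding mem_floor by auto
    have "real d * real k \<le> (x / y) * y" using h by (intro mult_mono) auto
    then have "real (d * k) \<le> x" using ypos by simp
    then show "(d,k) \<in> P1" "(d,k) \<in> P2" unfolding P1_def P2_def P_def using h by auto
  qed
  have S: "sum g P = sum g P1 + sum g P2 - sum g (P1 \<inter> P2)"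
    using sum.union_inter[OF finP1 finP2, of g] cover by simp
  have S1: "sum g P1 = (\<Sum>k\<in>{1..nat \<lfloor>y\<rfloor>}. mangoldt k * Mertens (x / real k))"
  proof -
    have eq: "(\<Sum>(k,d) \<in> (SIGMA k:{1..nat \<lfloor>y\<rfloor>}. {1..nat \<lfloor>x / real k\<rfloor>}). moebius_mu d * mangoldt k) = sum g P1"
    proof (rule sum.reindex_bij_witness[where j = "\<lambda>(k,d). (d,k)" and i = "\<lambda>(d,k). (k,d)"])
      fix a assume "a \<in> (SIGMA k:{1..nat \<lfloor>y\<rfloor>}. {1..nat \<lfloor>x / real k\<rfloor>})"
      then obtain k d where a: "a = (k,d)" "k \<in> {1..nat \<lfloor>y\<rfloor>}" "d \<in> {1..nat \<lfloor>x / real k\<rfloor>}" by auto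
      then have h: "1 \<le> k" "real k \<le> y" "1 \<le> d" "real d \<le> x / real k" unfolding mem_floor by auto
      then have "real d * real k \<le> x" by (simp add: pos_le_divide_eq)
      then show "(case (case a of (k, d) \<Rightarrow> (d, k)) of (d, k) \<Rightarrow> (k, d)) = a"
        "(case a of (k, d) \<Rightarrow> (d, k)) \<in> P1"
        "g (case a of (k, d) \<Rightarrow> (d, k)) = (case a of (k, d) \<Rightarrow> moebius_mu d * mangoldt k)"
        using a h unfolding P1_def P_def g_def by auto
    next
      fix b assume "b \<in> P1"
      then obtain d k where b: "b = (d,k)" "1 \<le> d" "1 \<le> k" "real d * real k \<le> x" "real k \<le> y"
        unfolding P1_def P_def by auto
      then have "real d \<le> x / real k" by (simp add: pos_le_divide_eq)
      then have "k \<in> {1..nat \<lfloor>y\<rfloor>}" "d \<in> {1..nat \<lfloor>x / real k\<rfloor>}" unfolding mem_floor using b by auto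
      then show "(case (case b of (d, k) \<Rightarrow> (k, d)) of (k, d) \<Rightarrow> (d, k)) = b"
        "(case b of (d, k) \<Rightarrow> (k, d)) \<in> (SIGMA k:{1..nat \<lfloor>y\<rfloor>}. {1..nat \<lfloor>x / real k\<rfloor>})"
        using b by auto
    qed
    have "sum g P1 = (\<Sum>(k,d) \<in> (SIGMA k:{1..nat \<lfloor>y\<rfloor>}. {1..nat \<lfloor>x / real k\<rfloor>}). moebius_mu d * mangoldt k)"
      using eq by simp
    also have "\<dots> = (\<Sum>k\<in>{1..nat \<lfloor>y\<rfloor>}. \<Sum>d\<in>{1..nat \<lfloor>x / real k\<rfloor>}. moebius_mu d * mangoldt k)"
      by (rule sum.Sigma[symmetric]) auto
    also have "\<dots> = (\<Sum>k\<in>{1..nat \<lfloor>y\<rfloor>}. mangoldt k * Mertens (x / real k))"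
      unfolding Mertens_def by (simp add: sum_distrib_left sum_distrib_right mult.commute)
    finally show ?thesis .
  qed
  have S2: "sum g P2 = (\<Sum>j\<in>{1..nat \<lfloor>x / y\<rfloor>}. moebius_mu j * psi (x / real j))"
  proof -
    have "P2 = (SIGMA d:{1..nat \<lfloor>x / y\<rfloor>}. {1..nat \<lfloor>x / real d\<rfloor>})"
    proof safe
      fix d k assume "(d,k) \<in> P2"
      then have h: "1 \<le> d" "1 \<le> k" "real d * real k \<le> x" "real d \<le> x / y"
        unfolding P2_def P_def by auto
      then have "real k \<le> x / real d" by (simp add: pos_le_divide_eq mult.commute)
      then show "d \<in> {1..nat \<lfloor>x / y\<rfloor>}" "k \<in> {1..nat \<lfloor>x / real d\<rfloor>}"
        using h unfolding mem_floor by auto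
    next
      fix d k assume "d \<in> {1..nat \<lfloor>x / y\<rfloor>}" "k \<in> {1..nat \<lfloor>x / real d\<rfloor>}"
      then have h: "1 \<le> d" "real d \<le> x / y" "1 \<le> k" "real k \<le> x / real d" unfolding mem_floor by auto
      then have "real d * real k \<le> x" by (simp add: pos_le_divide_eq mult.commute)
      then show "(d,k) \<in> P2" using h unfolding P2_def P_def by auto
    qed
    then have "sum g P2 = (\<Sum>d\<in>{1..nat \<lfloor>x / y\<rfloor>}. \<Sum>k\<in>{1..nat \<lfloor>x / real d\<rfloor>}. moebius_mu d * mangoldt k)"
      by (simp add: sum.Sigma g_def)
    also have "\<dots> = (\<Sum>j\<in>{1..nat \<lfloor>x / y\<rfloor>}. moebius_mu j * psi (x / real j))"
      unfolding psi_def by (simp add: sum_distrib_left)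
    finally show ?thesis .
  qed
  have S3: "sum g (P1 \<inter> P2) = Mertens (x / y) * psi y"
    unfolding inter psi_def Mertens_def g_def by (simp add: sum_product sum.cartesian_product)
  have "- Nmu x = sum g P" unfolding Nmu_pairs P_def g_def by simp
  then show ?thesis using S S1 S2 S3 by (simp add: mult.commute)
qed


theorem mainTheorem3:
  fixes x y :: real
  assumes "1 \<le> y" and "y \<le> x"
  shows "- Nmu x / x =
      (\<Sum>k\<in>{1..nat \<lfloor>y\<rfloor>}. mangoldt k / real k * (Mertens (x / real k) / (x / real k)))
    + (\<Sum>j\<in>{1..nat \<lfloor>x / y\<rfloor>}. moebius_mu j / real j * ((psi (x / real j) - x / real j) / (x / real j)))
    - (psi y - y) / y * (Mertens (x / y) / (x / y))
    + m1 (x / y)"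
proof -
  have ypos: "y > 0" and xpos: "x > 0" using assms by auto
  have A: "(\<Sum>k\<in>{1..nat \<lfloor>y\<rfloor>}. mangoldt k / real k * (Mertens (x / real k) / (x / real k)))
      = (\<Sum>k\<in>{1..nat \<lfloor>y\<rfloor>}. mangoldt k * Mertens (x / real k)) / x"
    unfolding sum_divide_distrib
  proof (rule sum.cong[OF refl])
    fix k assume "k \<in> {1..nat \<lfloor>y\<rfloor>}"
    then have "real k > 0" by auto
    then show "mangoldt k / real k * (Mertens (x / real k) / (x / real k)) = mangoldt k * Mertens (x / real k) / x"
      using xpos by (simp add: field_simps)
  qed
  have B: "(\<Sum>j\<in>{1..nat \<lfloor>x / y\<rfloor>}. moebius_mu j / real j * ((psi (x / real j) - x / real j) / (x / real j)))
      = (\<Sum>j\<in>{1..nat \<lfloor>x / y\<rfloor>}. moebius_mu j * psi (x / real j)) / x - mlog (x / y)"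
    unfolding sum_divide_distrib mlog_def sum_subtractf[symmetric]
  proof (rule sum.cong[OF refl])
    fix j assume "j \<in> {1..nat \<lfloor>x / y\<rfloor>}"
    then have "real j > 0" by auto
    then show "moebius_mu j / real j * ((psi (x / real j) - x / real j) / (x / real j)) = moebius_mu j * psi (x / real j) / x - moebius_mu j / real j"
      using xpos by (simp add: field_simps)
  qed
  have C: "(psi y - y) / y * (Mertens (x / y) / (x / y)) = (psi y - y) * Mertens (x / y) / x"
    using xpos ypos by (simp add: field_simps)
  have D: "m1 (x / y) = mlog (x / y) - y * Mertens (x / y) / x"
    unfolding m1_def using xpos ypos by (simp add: field_simps)
  show ?thesis
    unfolding A B C D hyperbola[OF assms]
    using xpos by (simp add: field_simps)
qed

end
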